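(* Let $\mathcal H$ be a real Hilbert space with inner product $\langle\cdot,\cdot\rangle$ and norm $\|\cdot\|$. Let $A, L_1, L_2$ be bounded linear operators on $\mathcal H$ and $b\in\mathcal H$, and define $$E(u)=\tfrac12\|Au-b\|^2,\qquad J_i(\mu)=\tfrac12\|L_i\mu\|^2\ (i=1,2),\qquad J(\mu)=J_1(\mu)-J_2(\mu),$$ where it is assumed that there is a bounded linear operator $L$ on $\mathcal H$ with $L^*L=L_1^*L_1-L_2^*L_2$, so that $J(\mu)=\tfrac12\|L\mu\|^2$. Fix $\delta t>0$. Let $(u^n,\mu^n,r^n)_{n\ge 0}\subset \mathcal H\times\mathcal H\times\mathbb R$ be a sequence satisfying, for every $n\ge0$ (with $J_2(\mu^n)>0$ so that the scheme is defined), $$\begin{cases}\dfrac{u^{n+1}-u^n}{\delta t} = -L_1^*L_1\mu^{n+1}+\dfrac{r^{n+1}}{\sqrt{J_2(\mu^n)}}\,L_2^*L_2\mu^n,\\[2mm] r^{n+1}-r^n=\dfrac{1}{2\sqrt{J_2(\mu^n)}}\langle L_2\mu^n, L_2(\mu^{n+1}-\mu^n)\rangle,\\[2mm] \mu^{n+1}=\nabla E(u^{n+1}),\end{cases}$$ with initial data satisfying $\mu^0=\nabla E(u^0)$ and $r^0=\sqrt{J_2(\mu^0)}$. Then: (i) for every $n\in\mathbb N$, if $r^{n+1}\ge 0$ then $E(u^{n+1})\le E(u^n)$; (ii) the functional $\tilde J(\mu,r):=\tfrac12\|L_1\mu\|^2-r^2$ satisfies $\tilde J(\mu^{n+1},r^{n+1})\le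 \tilde J(\mu^n,r^n)$ for every $n\in\mathbb N$.
   Context: $L_i^*$ denotes the Hilbert adjoint of $L_i$; $\nabla E(u)=A^*(Au-b)$ is the gradient of $E$ in $\mathcal H$. This is the first-order "mobility SAV" scheme for the gradient flow $u_t=-\nabla J(\mu)$, $\mu=\nabla E(u)$, where the scalar auxiliary variable $r$ approximates $\sqrt{J_2(\mu)}$. *)

theory Defs
  imports "HOL-Analysis.Analysis"
begin

definition energyE :: "('a::real_inner \<Rightarrow> 'a) \<Rightarrow> 'a \<Rightarrow> 'a \<Rightarrow> real" where
  "energyE A b u = (1/2) * (norm (A u - b))\<^sup>2"

definition quadJ :: "('a::real_inner \<Rightarrow> 'a) \<Rightarrow> 'a \<Rightarrow> real" where
  "quadJ L \<mu> = (1/2) * (norm (L \<mu>))\<^sup>2"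

definition gradE :: "('a::real_inner \<Rightarrow> 'a) \<Rightarrow> 'a \<Rightarrow> 'a \<Rightarrow> 'a" where
  "gradE A b u = adjoint A (A u - b)"

definition Jtilde :: "('a::real_inner \<Rightarrow> 'a) \<Rightarrow> 'a \<Rightarrow> real \<Rightarrow> real" where
  "Jtilde L1 \<mu> r = (1/2) * (norm (L1 \<mu>))\<^sup>2 - r\<^sup>2"

end

theory Submission imports Defs begin

lemma parallelogram_le:
  fixes a b :: "'a::real_inner"
  shows "(norm (a - b))\<^sup>2 = 2 * (norm a)\<^sup>2 + 2 * (norm b)\<^sup>2 - (norm (a + b))\<^sup>2"
  by (simp add: power2_norm_eq_inner inner_add_left inner_add_right inner_diff_left inner_diff_right inner_commute)

lemma cs_sq: "(inner (x::'a::real_inner) y)\<^sup>2 \<le> (norm x)\<^sup>2 * (norm y)\<^sup>2"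
  by (simp add: power2_norm_eq_inner Cauchy_Schwarz_ineq)

lemma riesz_aux:
  fixes \<phi> :: "'a::{real_inner,complete_space} \<Rightarrow> real"
  assumes bl: "bounded_linear \<phi>" and w: "\<phi> w = 1"
  shows "\<exists>z. \<phi> z = 1 \<and> (\<forall>y. \<phi> y = 0 \<longrightarrow> inner z y = 0)"
proof -
  define S where "S = norm ` {x. \<phi> x = 1}"
  define d where "d = Inf S"
  have Sne: "S \<noteq> {}" using w by (auto simp: S_def)
  have bdd: "bdd_below S" unfolding S_def by (rule bdd_belowI[of _ 0]) auto
  have dle: "d \<le> norm x" if "\<phi> x = 1" for x
    unfolding d_def by (rule cInf_lower[OF _ bdd]) (use that in \<open>auto simp: S_def\<close>)
  have d0: "0 \<le> d" using dle[OF w] unfolding d_def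
    by (metis Sne cInf_greatest S_def imageE norm_ge_zero)
  have "\<forall>n. \<exists>x. \<phi> x = 1 \<and> norm x < d + 1 / real (Suc n)"
  proof
    fix n
    have "Inf S < d + 1 / real (Suc n)" unfolding d_def by simp
    from cInf_lessD[OF Sne this] show "\<exists>x. \<phi> x = 1 \<and> norm x < d + 1 / real (Suc n)"
      by (auto simp: S_def)
  qed
  then obtain X where X1: "\<And>n. \<phi> (X n) = 1" and X2: "\<And>n. norm (X n) < d + 1 / real (Suc n)"
    by metis
  have sq: "(norm (X n))\<^sup>2 \<le> d\<^sup>2 + (2*d+1) * (1 / real (Suc n))" for n
  proof -
    define e where "e = 1 / real (Suc n)"
    have e0: "0 < e" "e \<le> 1" by (auto simp: e_def)
    have "(norm (X n))\<^sup>2 \<le> (d + e)\<^sup>2"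
      using X2[of n] by (intro power_mono) (auto simp: e_def)
    also have "\<dots> = d\<^sup>2 + (2*d+e)*e" by (simp add: power2_eq_square algebra_simps)
    also have "\<dots> \<le> d\<^sup>2 + (2*d+1)*e" using e0 d0 by (intro add_left_mono mult_right_mono) auto
    finally show ?thesis by (simp add: e_def)
  qed
  have key: "(norm (X m - X n))\<^sup>2 \<le> (4*d+2) * (1 / real (Suc m) + 1 / real (Suc n))" for m n
  proof -
    have "\<phi> ((1/2) *\<^sub>R (X m + X n)) = 1"
      using X1 by (simp add: linear_cmul[OF bounded_linear.linear[OF bl]] linear_add[OF bounded_linear.linear[OF bl]])
    hence "d \<le> norm ((1/2) *\<^sub>R (X m + X n))" by (rule dle)
    hence "2 * d \<le> norm (X m + X n)" by simp
    hence "(2*d)\<^sup>2 \<le> (norm (X m + X n))\<^sup>2" using d0 by (intro power_mono) auto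
    moreover have "(2*d)\<^sup>2 = 4 * d\<^sup>2" by (simp add: power2_eq_square)
    moreover have "(4*d+2) * (1 / real (Suc m) + 1 / real (Suc n)) = 2*((2*d+1) * (1 / real (Suc m))) + 2*((2*d+1) * (1 / real (Suc n)))"
      by (simp add: algebra_simps)
    ultimately show ?thesis using sq[of m] sq[of n] parallelogram_le[of "X m" "X n"]
      by linarith
  qed
  have "Cauchy X"
  proof (rule metric_CauchyI)
    fix e :: real assume e: "0 < e"
    obtain M :: nat where M: "2 * (4*d+2) / e\<^sup>2 < real M"
      using reals_Archimedean2 by blast
    have "\<forall>m\<ge>M. \<forall>n\<ge>M. dist (X m) (X n) < e"
    proof (intro allI impI)
      fix m n assume mn: "M \<le> m" "M \<le> n"
      have e2: "0 < e\<^sup>2" using e by simp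
      have Mpos: "0 < real (Suc M)" by simp
      have h1: "1 / real (Suc m) \<le> 1 / real (Suc M)" using mn by (intro divide_left_mono) auto
      have h2: "1 / real (Suc n) \<le> 1 / real (Suc M)" using mn by (intro divide_left_mono) auto
      have "(dist (X m) (X n))\<^sup>2 \<le> (4*d+2) * (2 / real (Suc M))"
      proof -
        have "(4*d+2) * (1 / real (Suc m) + 1 / real (Suc n)) \<le> (4*d+2) * (2 / real (Suc M))"
          using h1 h2 d0 by (intro mult_left_mono) auto
        thus ?thesis using key[of m n] unfolding dist_norm by linarith
      qed
      also have "\<dots> < e\<^sup>2"
      proof -
        have "2 * (4*d+2) < e\<^sup>2 * real (Suc M)" using M e2
          by (simp add: field_simps) (smt (verit) e2 mult_pos_pos)
        thus ?thesis using Mpos by (simp add: field_simps)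
      qed
      finally show "dist (X m) (X n) < e"
        using e by (smt (verit) power_mono zero_le_dist)
    qed
    thus "\<exists>M. \<forall>m\<ge>M. \<forall>n\<ge>M. dist (X m) (X n) < e" by blast
  qed
  then obtain z where Xz: "X \<longlonglongrightarrow> z" using Cauchy_convergent_iff convergent_def by blast
  have "(\<lambda>n. \<phi> (X n)) \<longlonglongrightarrow> \<phi> z" by (rule bounded_linear.tendsto[OF bl Xz])
  hence z1: "\<phi> z = 1" using X1 by (simp add: LIMSEQ_const_iff)
  have "(\<lambda>n. norm (X n)) \<longlonglongrightarrow> norm z" by (rule tendsto_norm[OF Xz])
  moreover have "(\<lambda>n. d + 1 / real (Suc n)) \<longlonglongrightarrow> d + 0"
    by (intro tendsto_add tendsto_const LIMSEQ_Suc[OF lim_inverse_n'])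
  ultimately have zd: "norm z \<le> d"
    using X2 by (intro LIMSEQ_le[of "\<lambda>n. norm (X n)" _ "\<lambda>n. d + 1 / real (Suc n)"]) (auto intro: less_imp_le)
  have orth: "inner z y = 0" if y: "\<phi> y = 0" for y
  proof (cases "y = 0")
    case True thus ?thesis by simp
  next
    case False
    define t where "t = - inner z y / (norm y)\<^sup>2"
    have ny: "0 < (norm y)\<^sup>2" using False by simp
    have "\<phi> (z + t *\<^sub>R y) = 1" using z1 y by (simp add: linear_cmul[OF bounded_linear.linear[OF bl]] linear_add[OF bounded_linear.linear[OF bl]])
    hence "norm z \<le> norm (z + t *\<^sub>R y)" using dle zd by fastforce
    hence "(norm z)\<^sup>2 \<le> (norm (z + t *\<^sub>R y))\<^sup>2" by (intro power_mono) auto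
    also have "\<dots> = (norm z)\<^sup>2 + 2 * t * inner z y + t\<^sup>2 * (norm y)\<^sup>2"
      unfolding power2_norm_eq_inner by (simp add: inner_add_left inner_add_right inner_commute power2_eq_square algebra_simps)
    also have "\<dots> = (norm z)\<^sup>2 - (inner z y)\<^sup>2 / (norm y)\<^sup>2"
      using ny by (simp add: t_def field_simps power2_eq_square)
    finally have "(inner z y)\<^sup>2 / (norm y)\<^sup>2 \<le> 0" by simp
    hence "(inner z y)\<^sup>2 \<le> 0" using ny by (simp add: divide_le_0_iff)
    thus ?thesis by simp
  qed
  show ?thesis using z1 orth by blast
qed

lemma riesz:
  fixes \<phi> :: "'a::{real_inner,complete_space} \<Rightarrow> real"
  assumes bl: "bounded_linear \<phi>"
  shows "\<exists>z. \<forall>x. \<phi> x = inner z x"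
proof (cases "\<forall>x. \<phi> x = 0")
  case True thus ?thesis by (intro exI[of _ 0]) simp
next
  case False
  then obtain w where w: "\<phi> w \<noteq> 0" by blast
  have "\<phi> ((1 / \<phi> w) *\<^sub>R w) = 1" using w by (simp add: linear_cmul[OF bounded_linear.linear[OF bl]])
  from riesz_aux[OF bl this] obtain z where z1: "\<phi> z = 1" and orth: "\<And>y. \<phi> y = 0 \<Longrightarrow> inner z y = 0" by blast
  have zz: "inner z z \<noteq> 0" using z1 linear_0[OF bounded_linear.linear[OF bl]] by auto
  have "\<phi> x = inner ((1 / inner z z) *\<^sub>R z) x" for x
  proof -
    have "\<phi> (x - \<phi> x *\<^sub>R z) = 0" using z1 by (simp add: linear_diff[OF bounded_linear.linear[OF bl]] linear_cmul[OF bounded_linear.linear[OF bl]])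
    hence "inner z (x - \<phi> x *\<^sub>R z) = 0" by (rule orth)
    hence "inner z x = \<phi> x * inner z z" by (simp add: inner_diff_right)
    thus ?thesis using zz by simp
  qed
  thus ?thesis by blast
qed

lemma adjoint_hilbert:
  fixes T :: "'a::{real_inner,complete_space} \<Rightarrow> 'a"
  assumes bl: "bounded_linear T"
  shows "inner x (adjoint T y) = inner (T x) y"
proof -
  have "\<forall>y. \<exists>z. \<forall>x. inner (T x) y = inner x z"
  proof
    fix y
    have "bounded_linear (\<lambda>x. inner (T x) y)"
      using bounded_linear_compose[OF bounded_linear_inner_left bl] by simp
    from riesz[OF this] obtain z where "\<forall>x. inner (T x) y = inner z x" by blast
    thus "\<exists>z. \<forall>x. inner (T x) y = inner x z" by (metis inner_commute)
  qed
  then obtain f where f: "\<forall>y x. inner (T x) y = inner x (f y)" by metis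
  hence "\<exists>f'. \<forall>x y. inner (T x) y = inner x (f' y)" by blast
  hence "\<forall>x y. inner (T x) y = inner x (adjoint T y)"
    unfolding adjoint_def by (rule someI_ex)
  thus ?thesis by simp
qed

theorem proposition3p1:
  fixes A L1 L2 L :: "'a::{real_inner, complete_space} \<Rightarrow> 'a"
    and b :: 'a and dt :: real
    and u \<mu> :: "nat \<Rightarrow> 'a" and r :: "nat \<Rightarrow> real"
  assumes "bounded_linear A" "bounded_linear L1" "bounded_linear L2" "bounded_linear L"
    and "\<And>x. adjoint L (L x) = adjoint L1 (L1 x) - adjoint L2 (L2 x)"
    and "dt > 0"
    and "\<And>n. quadJ L2 (\<mu> n) > 0"
    and "\<And>n. (u (Suc n) - u n) /\<^sub>R dt =
            - adjoint L1 (L1 (\<mu> (Suc n)))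
            + (r (Suc n) / sqrt (quadJ L2 (\<mu> n))) *\<^sub>R adjoint L2 (L2 (\<mu> n))"
    and "\<And>n. r (Suc n) - r n =
            (1 / (2 * sqrt (quadJ L2 (\<mu> n)))) * inner (L2 (\<mu> n)) (L2 (\<mu> (Suc n) - \<mu> n))"
    and "\<And>n. \<mu> (Suc n) = gradE A b (u (Suc n))"
    and "\<mu> 0 = gradE A b (u 0)"
    and "r 0 = sqrt (quadJ L2 (\<mu> 0))"
  shows "(\<forall>n. r (Suc n) \<ge> 0 \<longrightarrow> energyE A b (u (Suc n)) \<le> energyE A b (u n))
       \<and> (\<forall>n. Jtilde L1 (\<mu> (Suc n)) (r (Suc n)) \<le> Jtilde L1 (\<mu> n) (r n))"
proof -
  note blA = assms(1) and bl1 = assms(2) and bl2 = assms(3) and blL = assms(4)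
  note LL = assms(5) and dt = assms(6) and J2pos = assms(7) and schU = assms(8)
    and schR = assms(9) and schM = assms(10) and init_r = assms(12)
  have adjA: "\<And>x y. inner x (adjoint A y) = inner (A x) y" using adjoint_hilbert[OF blA] .
  have adj1: "\<And>x y. inner x (adjoint L1 y) = inner (L1 x) y" using adjoint_hilbert[OF bl1] .
  have adj2: "\<And>x y. inner x (adjoint L2 y) = inner (L2 x) y" using adjoint_hilbert[OF bl2] .
  have adjL: "\<And>x y. inner x (adjoint L y) = inner (L x) y" using adjoint_hilbert[OF blL] .
  have linA: "linear A" using blA by (rule bounded_linear.linear)
  have lin1: "linear L1" using bl1 by (rule bounded_linear.linear)
  have lin2: "linear L2" using bl2 by (rule bounded_linear.linear)
  have L12: "(norm (L2 v))\<^sup>2 \<le> (norm (L1 v))\<^sup>2" for v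
  proof -
    have "0 \<le> inner (L v) (L v)" by simp
    also have "\<dots> = inner v (adjoint L (L v))" by (simp add: adjL)
    also have "\<dots> = inner (L1 v) (L1 v) - inner (L2 v) (L2 v)"
      by (simp add: LL inner_diff_right adj1 adj2)
    finally show ?thesis by (simp add: power2_norm_eq_inner)
  qed
  define a where "a n = L2 (\<mu> n)" for n
  define s where "s n = sqrt (quadJ L2 (\<mu> n))" for n
  have spos: "0 < s n" for n using J2pos[of n] by (simp add: s_def)
  have ssq: "(s n)\<^sup>2 = (1/2) * (norm (a n))\<^sup>2" for n
    using J2pos[of n] by (simp add: s_def a_def quadJ_def)
  have rstep: "r (Suc n) = r n + inner (a n) (a (Suc n) - a n) / (2 * s n)" for n
    using schR[of n] by (simp add: a_def s_def linear_diff[OF lin2])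
  have qle: "inner (a n) (a (Suc n)) / (2 * s n) \<le> s (Suc n)" for n
  proof -
    have "(inner (a n) (a (Suc n)))\<^sup>2 \<le> (norm (a n))\<^sup>2 * (norm (a (Suc n)))\<^sup>2"
      by (rule cs_sq)
    also have "\<dots> = (2 * s n)\<^sup>2 * (s (Suc n))\<^sup>2"
    proof -
      have e1: "(norm (a n))\<^sup>2 = 2 * (s n)\<^sup>2" "(norm (a (Suc n)))\<^sup>2 = 2 * (s (Suc n))\<^sup>2"
        using ssq[of n] ssq[of "Suc n"] by simp_all
      show ?thesis unfolding e1 by (simp add: power_mult_distrib)
    qed
    also have "\<dots> = (2 * s n * s (Suc n))\<^sup>2" by (simp add: power_mult_distrib)
    finally have "\<bar>inner (a n) (a (Suc n))\<bar>\<^sup>2 \<le> (2 * s n * s (Suc n))\<^sup>2" by simp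
    hence "\<bar>inner (a n) (a (Suc n))\<bar> \<le> 2 * s n * s (Suc n)"
      using power2_le_imp_le[OF _ less_imp_le[OF mult_pos_pos[OF mult_pos_pos[OF _ spos[of n]] spos[of "Suc n"]]]] by simp
    hence "inner (a n) (a (Suc n)) \<le> s (Suc n) * (2 * s n)" by (simp add: algebra_simps)
    thus ?thesis using spos[of n] by (simp add: pos_divide_le_eq)
  qed
  have inv: "r n \<le> s n" for n
  proof (induction n)
    case 0 thus ?case using init_r by (simp add: s_def)
  next
    case (Suc n)
    have "inner (a n) (a (Suc n) - a n) = inner (a n) (a (Suc n)) - 2 * (s n)\<^sup>2"
      using ssq[of n] by (simp add: inner_diff_right power2_norm_eq_inner)
    hence "r (Suc n) = r n - s n + inner (a n) (a (Suc n)) / (2 * s n)"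
      using rstep[of n] spos[of n] by (simp add: field_simps power2_eq_square)
    thus ?case using Suc qle[of n] by linarith
  qed
  have rq: "r (Suc n) \<le> inner (a n) (a (Suc n)) / (2 * s n)" for n
  proof -
    have "inner (a n) (a (Suc n) - a n) = inner (a n) (a (Suc n)) - 2 * (s n)\<^sup>2"
      using ssq[of n] by (simp add: inner_diff_right power2_norm_eq_inner)
    hence "r (Suc n) = r n - s n + inner (a n) (a (Suc n)) / (2 * s n)"
      using rstep[of n] spos[of n] by (simp add: field_simps power2_eq_square)
    thus ?thesis using inv[of n] by linarith
  qed
  define v where "v n = u (Suc n) - u n" for n
  define c where "c n = r (Suc n) / s n" for n
  have vdef: "v n = dt *\<^sub>R (- adjoint L1 (L1 (\<mu> (Suc n))) + c n *\<^sub>R adjoint L2 (a n))" for n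
  proof -
    have "v n = dt *\<^sub>R ((u (Suc n) - u n) /\<^sub>R dt)" using dt by (simp add: v_def)
    thus ?thesis by (simp only: schU) (simp add: c_def s_def a_def)
  qed
  have innv: "inner x (v n) = dt * (- inner (L1 x) (L1 (\<mu> (Suc n))) + c n * inner (L2 x) (a n))" for x n
    by (simp add: vdef inner_add_right inner_diff_right adj1 adj2)
  have Emu: "inner (v n) (\<mu> (Suc n)) = inner (A (v n)) (A (u (Suc n)) - b)" for n
    using adjA by (simp add: schM gradE_def)
  have part1: "energyE A b (u (Suc n)) \<le> energyE A b (u n)" if rpos: "r (Suc n) \<ge> 0" for n
  proof -
    define q where "q = inner (a n) (a (Suc n)) / (2 * s n)"
    have "inner (\<mu> (Suc n)) (v n) = dt * (- (norm (L1 (\<mu> (Suc n))))\<^sup>2 + c n * inner (a (Suc n)) (a n))"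
      by (simp add: innv a_def power2_norm_eq_inner)
    moreover have "c n * inner (a (Suc n)) (a n) = 2 * r (Suc n) * q"
      using spos[of n] by (simp add: c_def q_def inner_commute field_simps)
    moreover have "2 * r (Suc n) * q \<le> (norm (L1 (\<mu> (Suc n))))\<^sup>2"
    proof -
      have q1: "r (Suc n) \<le> q" "q \<le> s (Suc n)" using rq[of n] qle[of n] by (simp_all add: q_def)
      have "2 * r (Suc n) * q \<le> 2 * q * q" using q1 rpos by (simp add: mult_right_mono)
      also have "\<dots> \<le> 2 * s (Suc n) * s (Suc n)" using q1 rpos
        by (intro mult_mono mult_left_mono) auto
      also have "\<dots> = (norm (a (Suc n)))\<^sup>2" using ssq[of "Suc n"] by (simp add: power2_eq_square)
      also have "\<dots> \<le> (norm (L1 (\<mu> (Suc n))))\<^sup>2" using L12 by (simp add: a_def)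
      finally show ?thesis .
    qed
    ultimately have neg: "inner (\<mu> (Suc n)) (v n) \<le> 0" using dt
      by (simp add: mult_le_0_iff)
    have "A (u n) - b = (A (u (Suc n)) - b) - A (v n)" by (simp add: v_def linear_diff[OF linA])
    hence "(norm (A (u n) - b))\<^sup>2 = (norm (A (u (Suc n)) - b))\<^sup>2 - 2 * inner (A (v n)) (A (u (Suc n)) - b) + (norm (A (v n)))\<^sup>2"
      unfolding power2_norm_eq_inner by (simp add: inner_diff_left inner_diff_right inner_commute)
    moreover have "0 \<le> (norm (A (v n)))\<^sup>2" by simp
    moreover have "inner (\<mu> (Suc n)) (v n) = inner (v n) (\<mu> (Suc n))" by (rule inner_commute)
    ultimately show ?thesis using neg Emu[of n] unfolding energyE_def by linarith
  qed
  have part2: "Jtilde L1 (\<mu> (Suc n)) (r (Suc n)) \<le> Jtilde L1 (\<mu> n) (r n)" for n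
  proof -
    define d where "d = \<mu> (Suc n) - \<mu> n"
    define p where "p = L1 (\<mu> (Suc n))"
    define p0 where "p0 = L1 (\<mu> n)"
    define g where "g = inner (a n) (L2 d)"
    have L1d: "L1 d = p - p0" by (simp add: d_def p_def p0_def linear_diff[OF lin1])
    have "inner (v n) d = inner (A (v n)) (A (v n))"
    proof -
      have "inner (v n) (\<mu> n) = inner (A (v n)) (A (u n) - b)"
      proof -
        have "\<mu> n = gradE A b (u n)" using assms(11) schM by (cases n) auto
        thus ?thesis using adjA by (simp add: gradE_def)
      qed
      moreover have "A (u (Suc n)) - b - (A (u n) - b) = A (v n)" by (simp add: v_def linear_diff[OF linA])
      ultimately show ?thesis using Emu[of n]
        by (metis d_def inner_diff_right)
    qed
    hence "0 \<le> inner d (v n)" by (simp add: inner_commute)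
    hence "0 \<le> dt * (- inner p (p - p0) + c n * g)"
      by (simp add: innv L1d g_def inner_commute p_def)
    hence h1: "inner p (p - p0) \<le> c n * g" using dt by (simp add: zero_le_mult_iff)
    have gr: "g = 2 * s n * (r (Suc n) - r n)"
      using rstep[of n] spos[of n] by (simp add: g_def d_def a_def linear_diff[OF lin2] field_simps)
    have h2: "c n * g = 2 * r (Suc n) * (r (Suc n) - r n)"
      using spos[of n] by (simp add: gr c_def)
    have h3: "(r (Suc n) - r n)\<^sup>2 \<le> (1/2) * (norm (p - p0))\<^sup>2"
    proof -
      have "(2 * s n * (r (Suc n) - r n))\<^sup>2 \<le> (norm (a n))\<^sup>2 * (norm (L2 d))\<^sup>2"
        unfolding gr[symmetric] g_def
        by (rule cs_sq)
      also have "\<dots> = (2 * s n)\<^sup>2 * ((1/2) * (norm (L2 d))\<^sup>2)" using ssq[of n]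
        by (simp add: power2_eq_square)
      finally have "(r (Suc n) - r n)\<^sup>2 \<le> (1/2) * (norm (L2 d))\<^sup>2"
        using spos[of n] by (simp add: power_mult_distrib)
      also have "\<dots> \<le> (1/2) * (norm (p - p0))\<^sup>2" using L12[of d] L1d by simp
      finally show ?thesis .
    qed
    have h4: "inner p (p - p0) = (1/2) * ((norm p)\<^sup>2 - (norm p0)\<^sup>2 + (norm (p - p0))\<^sup>2)"
      unfolding power2_norm_eq_inner by (simp add: inner_diff_left inner_diff_right inner_commute)
    have h5: "2 * r (Suc n) * (r (Suc n) - r n) = (r (Suc n))\<^sup>2 - (r n)\<^sup>2 + (r (Suc n) - r n)\<^sup>2"
      by (simp add: power2_eq_square algebra_simps)
    show ?thesis using h1 h2 h3 h4 h5 by (simp add: Jtilde_def p_def p0_def)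
  qed
  show ?thesis using part1 part2 by blast
qed

end
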